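(* Let $N\ge 1$, $1\le s\le N$ and $r$ be integers, and let $t,\Delta$ be generic complex parameters. Define the rational function $$\mathcal J(z_1,\dots,z_s)=\prod_{j=1}^{s}\frac{(t^2-2\Delta t+z_j)^{s-j}}{z_j^{N-r}(z_j-1)^{s-j+1}}\prod_{1\le j<k\le s}\frac{z_j-z_k}{t^2-2\Delta t z_k+z_jz_k}\;\tilde h_{N,s}(z_1,\dots,z_s).$$ Then the iterated residue at $z=1$, taken first in $z_s$, then in $z_{s-1}$, ..., finally in $z_1$, equals one: $$\operatorname*{res}_{z_1=1}\operatorname*{res}_{z_2=1}\cdots\operatorname*{res}_{z_s=1}\mathcal J(z_1,\dots,z_s)=1.$$
   Context: Define functions $\phi_j(t)$ by $\phi_0\equiv1$ and $\phi_{j+1}(t)=t\frac{d}{dt}\big[(t-2\Delta+t^{-1})\phi_j(t)\big]$. For $N\ge1$ the polynomial $h_N(z)=h_N(z;t,\Delta)$ (of degree $N-1$ in $z$, with $h_N(1)=1$) is $$h_N(z)=(N-1)!\Big((t-2\Delta+t^{-1})\frac{z}{z-1}\Big)^{N-1}\frac{\det\big[M_{ij}\big]_{i,j=1}^N}{\det[\phi_{i+j-2}(t)]_{i,j=1}^N},$$ where $M_{ij}=\phi_{i+j-2}(t)$ for $j=1,\dots,N-1$ and $M_{iN}=\phi_{i-1}(tz)$. (It is the generating function $h_N(z)=\sum_{r=1}^N H_N^{(r)}z^{r-1}$ of the boundary one-point correlation function of the six-vertex model with domain wall boundary conditions, $\Delta=(a^2+b^2-c^2)/(2ab)$, $t=b/a$.)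 Let $\tilde h_N(z)=z^{N-1}h_N(z^{-1})$ and, for $1\le s\le N$, $$\tilde h_{N,s}(z_1,\dots,z_s)=\frac{\det\big[(z_j-1)^{s-i}z_j^{i-1}\tilde h_{N-i+1}(z_j)\big]_{i,j=1}^{s}}{\prod_{1\le i<j\le s}(z_i-z_j)},$$ a symmetric polynomial. *)

theory Defs
  imports "HOL-Complex_Analysis.Complex_Analysis"
          "HOL-Computational_Algebra.Polynomial"
          "Jordan_Normal_Form.Determinant"
begin

fun phi :: "complex \<Rightarrow> nat \<Rightarrow> complex \<Rightarrow> complex" where
  "phi \<Delta> 0 = (\<lambda>t. 1)"
| "phi \<Delta> (Suc j) = (\<lambda>t. t * deriv (\<lambda>u. (u - 2 * \<Delta> + inverse u) * phi \<Delta> j u) t)"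

definition hN :: "complex \<Rightarrow> complex \<Rightarrow> nat \<Rightarrow> complex \<Rightarrow> complex" where
  "hN t \<Delta> N z =
     fact (N - 1) * ((t - 2 * \<Delta> + inverse t) * (z / (z - 1))) ^ (N - 1) *
     Determinant.det (Matrix.mat N N (\<lambda>(i, j). if j < N - 1 then phi \<Delta> (i + j) t else phi \<Delta> i (t * z)))
     / Determinant.det (Matrix.mat N N (\<lambda>(i, j). phi \<Delta> (i + j) t))"

definition htilde :: "complex \<Rightarrow> complex \<Rightarrow> nat \<Rightarrow> complex \<Rightarrow> complex" where
  "htilde t \<Delta> N z = z ^ (N - 1) * hN t \<Delta> N (inverse z)"

definition htilde_s :: "complex \<Rightarrow> complex \<Rightarrow> nat \<Rightarrow> nat \<Rightarrow> complex list \<Rightarrow> complex" where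
  "htilde_s t \<Delta> N s zs =
     Determinant.det (Matrix.mat s s (\<lambda>(i, j). (zs ! j - 1) ^ (s - 1 - i) * (zs ! j) ^ i * htilde t \<Delta> (N - i) (zs ! j)))
     / (\<Prod>i<s. \<Prod>j\<in>{i<..<s}. (zs ! i - zs ! j))"

definition Jfun :: "complex \<Rightarrow> complex \<Rightarrow> nat \<Rightarrow> int \<Rightarrow> nat \<Rightarrow> complex list \<Rightarrow> complex" where
  "Jfun t \<Delta> N r s zs =
     (\<Prod>j<s. (t ^ 2 - 2 * \<Delta> * t + zs ! j) ^ (s - 1 - j)
              / ((zs ! j) powi (int N - r) * (zs ! j - 1) ^ (s - j)))
   * (\<Prod>j<s. \<Prod>k\<in>{j<..<s}. (zs ! j - zs ! k) / (t ^ 2 - 2 * \<Delta> * t * zs ! k + zs ! j * zs ! k))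
   * htilde_s t \<Delta> N s zs"

text \<open>Iterated residue at 1: iter_res s F [] = res_(z_1=1) ... res_(z_s=1) F [z_1,...,z_s],
  the residue in the last variable z_s being taken first.\<close>
fun iter_res :: "nat \<Rightarrow> (complex list \<Rightarrow> complex) \<Rightarrow> complex list \<Rightarrow> complex" where
  "iter_res 0 F = F"
| "iter_res (Suc k) F = iter_res k (\<lambda>zs. residue (\<lambda>w. F (zs @ [w])) 1)"

end

theory Submission
  imports Defs
begin


declare phi.simps(2) [simp del]

lemma open_nz: "open (-{0::complex})" by (simp add: open_Compl)

lemma phi_holo: "phi \<Delta> j holomorphic_on (-{0})"
proof (induction j)
  case 0 then show ?case by simp
next
  case (Suc j)
  have "(\<lambda>u. (u - 2 * \<Delta> + inverse u) * phi \<Delta> j u) holomorphic_on (-{0})"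
    using Suc by (intro holomorphic_intros) auto
  then have "deriv (\<lambda>u. (u - 2 * \<Delta> + inverse u) * phi \<Delta> j u) holomorphic_on (-{0})"
    by (intro holomorphic_deriv open_nz)
  then show ?case unfolding phi.simps(2) using Suc.IH by (auto intro!: holomorphic_intros)
qed

lemma phi_deriv:
  assumes "u \<noteq> 0"
  shows "((\<lambda>u. (u - 2 * \<Delta> + inverse u) * phi \<Delta> j u) has_field_derivative phi \<Delta> (Suc j) u / u) (at u)"
proof -
  let ?G = "\<lambda>u. (u - 2 * \<Delta> + inverse u) * phi \<Delta> j u"
  have "?G holomorphic_on (-{0})" using phi_holo by (intro holomorphic_intros) auto
  then have "?G field_differentiable at u"
    using assms holomorphic_on_imp_differentiable_at open_nz by blast
  then have "(?G has_field_derivative deriv ?G u) (at u)"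
    using DERIV_deriv_iff_field_differentiable by blast
  moreover have "deriv ?G u = phi \<Delta> (Suc j) u / u"
  proof -
    have e: "phi \<Delta> (Suc j) u = u * deriv ?G u" by (simp only: phi.simps)
    show ?thesis unfolding e using assms by (metis nonzero_mult_div_cancel_left)
  qed
  ultimately show ?thesis by (simp only:)
qed

lemma ring_helper: "(P * (u * w) - Q * (c * w)) * u = u * w * (u * P - c * Q)" for P Q u w c :: complex
  by (simp add: algebra_simps)

fun qq :: "complex \<Rightarrow> nat \<Rightarrow> complex poly" where
  "qq \<Delta> 0 = 1"
| "qq \<Delta> (Suc j) = pCons 0 (pderiv ([:1, -2*\<Delta>, 1:] * qq \<Delta> j))
      - Polynomial.smult (of_nat (Suc j)) ([:1, -2*\<Delta>, 1:] * qq \<Delta> j)"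

lemma qq_phi: "u \<noteq> 0 \<Longrightarrow> poly (qq \<Delta> j) u = u ^ j * phi \<Delta> j u"
proof (induction j arbitrary: u)
  case 0 then show ?case by simp
next
  case (Suc j)
  define q where "q = [:1, -2*\<Delta>, 1:] * qq \<Delta> j"
  let ?G = "\<lambda>u. (u - 2 * \<Delta> + inverse u) * phi \<Delta> j u"
  let ?F = "\<lambda>v. poly q v / v ^ Suc j"
  have eq: "?F v = ?G v" if "v \<in> -{0}" for v
    using that Suc.IH[of v] by (simp add: q_def field_simps power2_eq_square)
  have dpow: "((\<lambda>v. v ^ Suc j) has_field_derivative of_nat (Suc j) * u ^ j) (at u)"
    using DERIV_power[OF DERIV_ident, of "Suc j" u] by simp
  have dF: "(?F has_field_derivative
      (poly (pderiv q) u * u ^ Suc j - poly q u * (of_nat (Suc j) * u ^ j)) / (u ^ Suc j * u ^ Suc j)) (at u)"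
    using Suc.prems by (intro DERIV_divide poly_DERIV dpow) auto
  have dG: "(?G has_field_derivative
      (poly (pderiv q) u * u ^ Suc j - poly q u * (of_nat (Suc j) * u ^ j)) / (u ^ Suc j * u ^ Suc j)) (at u)"
    using has_field_derivative_transform_within_open[OF dF open_nz] eq Suc.prems by auto
  have e1: "phi \<Delta> (Suc j) u / u = (poly (pderiv q) u * u ^ Suc j - poly q u * (of_nat (Suc j) * u ^ j)) / (u ^ Suc j * u ^ Suc j)"
    using DERIV_unique[OF phi_deriv[OF Suc.prems] dG] .
  have e2: "poly (qq \<Delta> (Suc j)) u = u * poly (pderiv q) u - of_nat (Suc j) * poly q u"
    unfolding qq.simps q_def[symmetric] by simp
  define a where "a = phi \<Delta> (Suc j) u"
  define w where "w = u ^ j"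
  have e1': "a / u = (poly (pderiv q) u * (u * w) - poly q u * (of_nat (Suc j) * w)) / ((u * w) * (u * w))"
    using e1 unfolding a_def w_def by (simp only: power_Suc)
  have wnz: "w \<noteq> 0" using Suc.prems by (simp add: w_def)
  have e1'': "a * ((u * w) * (u * w)) = (poly (pderiv q) u * (u * w) - poly q u * (of_nat (Suc j) * w)) * u"
  proof -
    have dnz: "(u * w) * (u * w) \<noteq> 0" using Suc.prems wnz by simp
    show ?thesis using iffD1[OF frac_eq_eq[OF Suc.prems dnz] e1'] .
  qed
  have "(u * w) * ((u * w) * a) = (u * w) * (u * poly (pderiv q) u - of_nat (Suc j) * poly q u)"
  proof -
    have "(u * w) * ((u * w) * a) = a * ((u * w) * (u * w))" by (simp only: mult_ac)
    also have "\<dots> = (poly (pderiv q) u * (u * w) - poly q u * (of_nat (Suc j) * w)) * u" by (rule e1'')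
    also have "\<dots> = (u * w) * (u * poly (pderiv q) u - of_nat (Suc j) * poly q u)"
      by (rule ring_helper)
    finally show ?thesis .
  qed
  then have "(u * w) * a = u * poly (pderiv q) u - of_nat (Suc j) * poly q u"
    using Suc.prems wnz by simp
  then have X: "u * (u ^ j * phi \<Delta> (Suc j) u) = u * poly (pderiv q) u - of_nat (Suc j) * poly q u"
    unfolding a_def w_def by (simp only: mult.assoc)
  show ?case by (simp only: e2 power_Suc mult.assoc X)
qed

lemma qq_0: "poly (qq \<Delta> j) 0 = (-1)^j * fact j"
proof (induction j)
  case 0 then show ?case by simp
next
  case (Suc j)
  have "poly (qq \<Delta> (Suc j)) 0 = - (of_nat (Suc j) * poly (qq \<Delta> j) 0)"
    by (simp only: qq.simps poly_diff poly_pCons poly_smult poly_mult) simp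
  then show ?case using Suc.IH by (simp del: qq.simps)
qed


definition pf :: "(complex \<Rightarrow> complex \<Rightarrow> complex) \<Rightarrow> bool" where
  "pf F \<longleftrightarrow> (\<exists>P :: complex poly poly. \<forall>\<Delta> t. poly (poly P [:\<Delta>:]) t = F \<Delta> t)"

lemma pf_const: "pf (\<lambda>\<Delta> t. c)"
  unfolding pf_def by (rule exI[of _ "[:[:c:]:]"]) simp

lemma pf_Delta: "pf (\<lambda>\<Delta> t. \<Delta>)"
  unfolding pf_def by (rule exI[of _ "[:0, 1:]"]) simp

lemma pf_t: "pf (\<lambda>\<Delta> t. t)"
  unfolding pf_def by (rule exI[of _ "[:[:0, 1:]:]"]) simp

lemma pf_add: "pf F \<Longrightarrow> pf G \<Longrightarrow> pf (\<lambda>\<Delta> t. F \<Delta> t + G \<Delta> t)"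
  unfolding pf_def by (metis poly_add)

lemma pf_mult: "pf F \<Longrightarrow> pf G \<Longrightarrow> pf (\<lambda>\<Delta> t. F \<Delta> t * G \<Delta> t)"
  unfolding pf_def by (metis poly_mult)

lemma pf_uminus: "pf F \<Longrightarrow> pf (\<lambda>\<Delta> t. - F \<Delta> t)"
  unfolding pf_def by (metis poly_minus)

lemma pf_diff: "pf F \<Longrightarrow> pf G \<Longrightarrow> pf (\<lambda>\<Delta> t. F \<Delta> t - G \<Delta> t)"
  using pf_add[OF _ pf_uminus, of F G] by simp

lemma pf_sum: "finite A \<Longrightarrow> (\<And>a. a \<in> A \<Longrightarrow> pf (F a)) \<Longrightarrow> pf (\<lambda>\<Delta> t. \<Sum>a\<in>A. F a \<Delta> t)"
proof (induction A rule: finite_induct)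
  case empty then show ?case using pf_const[of 0] by simp
next
  case (insert x A) then show ?case using pf_add[of "F x" "\<lambda>\<Delta> t. \<Sum>a\<in>A. F a \<Delta> t"] by simp
qed

lemma pf_prod: "finite A \<Longrightarrow> (\<And>a. a \<in> A \<Longrightarrow> pf (F a)) \<Longrightarrow> pf (\<lambda>\<Delta> t. \<Prod>a\<in>A. F a \<Delta> t)"
proof (induction A rule: finite_induct)
  case empty then show ?case using pf_const[of 1] by simp
next
  case (insert x A) then show ?case using pf_mult[of "F x" "\<lambda>\<Delta> t. \<Prod>a\<in>A. F a \<Delta> t"] by simp
qed

lemma det_mat_expand:
  "Determinant.det (Matrix.mat n n (\<lambda>(i, j). g i j)) =
     (\<Sum>p | p permutes {0..<n}. of_int (sign p) * (\<Prod>i = 0..<n. g i (p i)))"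
proof -
  have "Determinant.det (Matrix.mat n n (\<lambda>(i, j). g i j)) =
     (\<Sum>p | p permutes {0..<n}. of_int (sign p) * (\<Prod>i = 0..<n. Matrix.mat n n (\<lambda>(i, j). g i j) $$ (i, p i)))"
    by (rule det_def') simp
  also have "\<dots> = (\<Sum>p | p permutes {0..<n}. of_int (sign p) * (\<Prod>i = 0..<n. g i (p i)))"
  proof (rule sum.cong[OF refl])
    fix p assume "p \<in> {p. p permutes {0..<n}}"
    then have p: "p permutes {0..<n}" by simp
    show "of_int (sign p) * (\<Prod>i = 0..<n. Matrix.mat n n (\<lambda>(i, j). g i j) $$ (i, p i)) =
          of_int (sign p) * (\<Prod>i = 0..<n. g i (p i))"
      by (intro arg_cong2[where f="(*)"] refl prod.cong) (use permutes_in_image[OF p] in auto)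
  qed
  finally show ?thesis .
qed

lemma pf_det:
  assumes "\<And>i j. i < n \<Longrightarrow> j < n \<Longrightarrow> pf (f i j)"
  shows "pf (\<lambda>\<Delta> t. Determinant.det (Matrix.mat n n (\<lambda>(i, j). f i j \<Delta> t)))"
proof -
  have "pf (\<lambda>\<Delta> t. \<Sum>p | p permutes {0..<n}. of_int (sign p) * (\<Prod>i = 0..<n. f i (p i) \<Delta> t))"
  proof (rule pf_sum)
    show "finite {p. p permutes {0..<n}}" by (simp add: finite_permutations)
    fix p assume "p \<in> {p. p permutes {0..<n}}"
    then have p: "p permutes {0..<n}" by simp
    show "pf (\<lambda>\<Delta> t. of_int (sign p) * (\<Prod>i = 0..<n. f i (p i) \<Delta> t))"
      by (intro pf_mult pf_const pf_prod) (use permutes_in_image[OF p] assms in auto)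
  qed
  then show ?thesis by (simp only: det_mat_expand)
qed

lemma degree_qq: "degree (qq \<Delta> j) \<le> 2 * j"
proof (induction j)
  case 0 then show ?case by simp
next
  case (Suc j)
  let ?q = "[:1, -2*\<Delta>, 1:] * qq \<Delta> j"
  have d2: "degree [:1, -2*\<Delta>, (1::complex):] \<le> 2"
    by simp
  have dq: "degree ?q \<le> 2 * j + 2"
    using degree_mult_le[of "[:1, -2*\<Delta>, 1:]" "qq \<Delta> j"] d2 Suc.IH by linarith
  have "degree ?q \<le> 2 * Suc j" using dq by simp
  moreover have "degree (pCons 0 (pderiv ?q)) \<le> 2 * Suc j"
    using dq by (intro order_trans[OF degree_pCons_le]) (auto simp: degree_pderiv)
  ultimately show ?case
    by (simp only: qq.simps) (intro degree_diff_le order_trans[OF degree_smult_le])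
qed

lemma pf_coeff_q:
  assumes "\<And>k. pf (\<lambda>\<Delta> t. coeff (Q \<Delta>) k)"
  shows "pf (\<lambda>\<Delta> t. coeff ([:1, -2*\<Delta>, 1:] * Q \<Delta>) k)"
proof -
  have c: "pf (\<lambda>\<Delta> t. coeff [:1, -2*\<Delta>, (1::complex):] i)" for i
  proof (cases i)
    case 0 then show ?thesis using pf_const[of 1] by simp
  next
    case (Suc i')
    show ?thesis
    proof (cases i')
      case 0 then show ?thesis using Suc pf_mult[OF pf_const[of "-2"] pf_Delta] by simp
    next
      case (Suc i'')
      then show ?thesis using \<open>i = Suc i'\<close> pf_const[of 1] pf_const[of 0]
        by (cases i'') simp_all
    qed
  qed
  show ?thesis unfolding coeff_mult
    by (intro pf_sum pf_mult c assms) simp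
qed

lemma pf_coeff_qq: "pf (\<lambda>\<Delta> t. coeff (qq \<Delta> j) k)"
proof (induction j arbitrary: k)
  case 0 then show ?case using pf_const[of 1] pf_const[of 0] by (cases k) simp_all
next
  case (Suc j)
  have q: "pf (\<lambda>\<Delta> t. coeff ([:1, -2*\<Delta>, 1:] * qq \<Delta> j) k)" for k
    by (rule pf_coeff_q[OF Suc.IH])
  have a: "pf (\<lambda>\<Delta> t. coeff (pCons 0 (pderiv ([:1, -2*\<Delta>, 1:] * qq \<Delta> j))) k)"
  proof (cases k)
    case 0 then show ?thesis using pf_const[of 0] by simp
  next
    case (Suc k') then show ?thesis
      by (simp only: coeff_pCons_Suc coeff_pderiv) (intro pf_mult pf_const q)
  qed
  show ?case
    by (simp only: qq.simps coeff_diff coeff_smult) (intro pf_diff pf_mult pf_const a q)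
qed

lemma poly_sum_le:
  fixes p :: "complex poly"
  assumes "degree p \<le> n" shows "poly p x = (\<Sum>i\<le>n. coeff p i * x ^ i)"
proof -
  have "poly p x = (\<Sum>i\<le>degree p. coeff p i * x ^ i)" by (rule poly_altdef)
  also have "\<dots> = (\<Sum>i\<le>n. coeff p i * x ^ i)"
    by (rule sum.mono_neutral_left) (use assms in \<open>auto simp: coeff_eq_0\<close>)
  finally show ?thesis .
qed

lemma pf_qq: "pf (\<lambda>\<Delta> t. poly (qq \<Delta> j) t)"
proof -
  have "pf (\<lambda>\<Delta> t. \<Sum>i\<le>2*j. coeff (qq \<Delta> j) i * t ^ i)"
  proof (intro pf_sum pf_mult pf_coeff_qq)
    fix i show "pf (\<lambda>\<Delta> t. t ^ i)"
      using pf_prod[of "{..<i}" "\<lambda>_ \<Delta> t. t"] pf_t by simp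
  qed simp
  then show ?thesis using poly_sum_le[OF degree_qq] by simp
qed

lemma det_scale:
  "Determinant.det (Matrix.mat n n (\<lambda>(i, j). a i * a j * b i j)) =
     (\<Prod>i<n. a i) ^ 2 * Determinant.det (Matrix.mat n n (\<lambda>(i, j). b i j :: 'a :: comm_ring_1))"
proof -
  have "(\<Sum>p | p permutes {0..<n}. of_int (sign p) * (\<Prod>i = 0..<n. a i * a (p i) * b i (p i)))
      = (\<Sum>p | p permutes {0..<n}. (\<Prod>i<n. a i) ^ 2 * (of_int (sign p) * (\<Prod>i = 0..<n. b i (p i))))"
  proof (rule sum.cong[OF refl])
    fix p assume "p \<in> {p. p permutes {0..<n}}"
    then have p: "p permutes {0..<n}" by simp
    have "(\<Prod>i = 0..<n. a (p i)) = (\<Prod>i = 0..<n. a i)"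
      using prod.permute[OF p, of a] by (simp add: comp_def)
    then show "of_int (sign p) * (\<Prod>i = 0..<n. a i * a (p i) * b i (p i)) =
          (\<Prod>i<n. a i) ^ 2 * (of_int (sign p) * (\<Prod>i = 0..<n. b i (p i)))"
      by (simp add: prod.distrib power2_eq_square atLeast0LessThan mult_ac)
  qed
  then show ?thesis by (simp only: det_mat_expand sum_distrib_left)
qed

lemma sum_choose_sq:
  assumes "i < n" "j < n"
  shows "(\<Sum>k<n. (i choose k) * (j choose k)) = (i + j) choose i"
proof -
  have "(\<Sum>k<n. (i choose k) * (j choose k)) = (\<Sum>k\<le>i. (i choose k) * (j choose k))"
    using assms by (intro sum.mono_neutral_right) auto
  also have "\<dots> = (\<Sum>k\<le>i. (j choose k) * (i choose (i - k)))"
    by (intro sum.cong refl) (simp add: binomial_symmetric[symmetric] mult.commute)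
  also have "\<dots> = (j + i) choose i" by (rule vandermonde)
  finally show ?thesis by (simp add: add.commute)
qed

lemma det_pascal: "Determinant.det (Matrix.mat n n (\<lambda>(i, j). of_nat ((i + j) choose i) :: complex)) = 1"
proof -
  define Pa :: "complex mat" where "Pa = Matrix.mat n n (\<lambda>(i, k). of_nat (i choose k))"
  have Pc: "Pa \<in> carrier_mat n n" by (simp add: Pa_def)
  have eq: "Matrix.mat n n (\<lambda>(i, j). of_nat ((i + j) choose i)) = Pa * transpose_mat Pa"
  proof (rule eq_matI)
    fix i j assume ij: "i < dim_row (Pa * transpose_mat Pa)" "j < dim_col (Pa * transpose_mat Pa)"
    then have i: "i < n" and j: "j < n" by (auto simp: Pa_def)
    have "(Pa * transpose_mat Pa) $$ (i, j) = (\<Sum>k = 0..<n. of_nat (i choose k) * of_nat (j choose k))"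
      using i j by (simp add: Pa_def scalar_prod_def)
    also have "\<dots> = of_nat (\<Sum>k<n. (i choose k) * (j choose k))"
      by (simp add: atLeast0LessThan)
    also have "\<dots> = of_nat ((i + j) choose i)" using sum_choose_sq[OF i j] by simp
    finally show "Matrix.mat n n (\<lambda>(i, j). of_nat ((i + j) choose i)) $$ (i, j) = (Pa * transpose_mat Pa) $$ (i, j)"
      using i j by simp
  qed (auto simp: Pa_def)
  have dP: "Determinant.det Pa = 1"
  proof -
    have "Determinant.det Pa = prod_list (diag_mat Pa)"
      by (rule det_lower_triangular[OF _ Pc]) (simp add: Pa_def)
    also have "\<dots> = prod_list (map (\<lambda>i. 1::complex) [0..<n])"
      unfolding diag_mat_def by (intro arg_cong[where f=prod_list] map_cong) (auto simp: Pa_def)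
    also have "\<dots> = 1" by (induction n) auto
    finally show ?thesis .
  qed
  show ?thesis unfolding eq
    using det_mult[OF Pc transpose_carrier_mat[THEN iffD2, OF Pc]] det_transpose[OF Pc] dP by simp
qed

lemma hankel_fact_ne0:
  "Determinant.det (Matrix.mat n n (\<lambda>(i, j). (-1) ^ (i + j) * fact (i + j) :: complex)) \<noteq> 0"
proof -
  have "Matrix.mat n n (\<lambda>(i, j). (-1) ^ (i + j) * fact (i + j) :: complex) =
        Matrix.mat n n (\<lambda>(i, j). ((-1) ^ i * fact i) * ((-1) ^ j * fact j) * of_nat ((i + j) choose i))"
  proof (rule eq_matI)
    fix i j
    have "fact (i + j) = (fact i * fact j * ((i + j) choose i) :: nat)"
      using binomial_fact_lemma[of i "i + j"] by simp
    then have "(fact (i + j) :: complex) = fact i * fact j * of_nat ((i + j) choose i)"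
      by (metis of_nat_fact of_nat_mult)
    then show "Matrix.mat n n (\<lambda>(i, j). (-1) ^ (i + j) * fact (i + j) :: complex) $$ (i, j) =
      Matrix.mat n n (\<lambda>(i, j). ((-1) ^ i * fact i) * ((-1) ^ j * fact j) * of_nat ((i + j) choose i)) $$ (i, j)"
      if "i < dim_row (Matrix.mat n n (\<lambda>(i, j). ((-1) ^ i * fact i) * ((-1) ^ j * fact j) * of_nat ((i + j) choose i) :: complex))"
         "j < dim_col (Matrix.mat n n (\<lambda>(i, j). ((-1) ^ i * fact i) * ((-1) ^ j * fact j) * of_nat ((i + j) choose i) :: complex))"
      using that by (simp add: power_add mult_ac)
  qed auto
  then show ?thesis
    by (simp only: det_scale det_pascal) simp
qed


lemma taylor_factor:
  fixes f :: "complex \<Rightarrow> complex"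
  assumes holf: "f holomorphic_on ball \<xi> r"
      and dfz: "\<And>i. i < n \<Longrightarrow> (deriv ^^ i) f \<xi> = 0"
  shows "\<exists>g. g holomorphic_on ball \<xi> r \<and> (\<forall>w\<in>ball \<xi> r. f w = (w - \<xi>) ^ n * g w)
            \<and> g \<xi> = (deriv ^^ n) f \<xi> / fact n"
proof -
  define g where "g w = suminf (\<lambda>i. (deriv ^^ (i + n)) f \<xi> / (fact(i + n)) * (w - \<xi>)^i)" for w
  have sumsg: "(\<lambda>i. (deriv ^^ (i + n)) f \<xi> / (fact(i + n)) * (w - \<xi>)^i) sums g w"
   and feq: "f w = (w - \<xi>)^n * g w"
       if w: "w \<in> ball \<xi> r" for w
  proof -
    define powf where "powf = (\<lambda>i. (deriv ^^ i) f \<xi>/(fact i) * (w - \<xi>)^i)"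
    have "powf sums f w"
      unfolding powf_def by (rule holomorphic_power_series [OF holf w])
    moreover have "(\<Sum>i<n. powf i) = 0"
      by (intro sum.neutral) (simp add: powf_def dfz)
    ultimately have fsums: "(\<lambda>i. powf (i+n)) sums (f w)"
      using sums_iff_shift'[of powf n "f w"] by simp
    then have *: "summable (\<lambda>i. (w - \<xi>) ^ n * ((deriv ^^ (i + n)) f \<xi> * (w - \<xi>) ^ i / fact (i + n)))"
      unfolding powf_def using sums_summable
      by (auto simp: power_add mult_ac)
    have "summable (\<lambda>i. (deriv ^^ (i + n)) f \<xi> * (w - \<xi>) ^ i / fact (i + n))"
    proof (cases "w=\<xi>")
      case False then show ?thesis
        using summable_mult [OF *, of "1 / (w - \<xi>) ^ n"] by simp
    next
      case True then show ?thesis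
        by (auto simp: Power.semiring_1_class.power_0_left intro!: summable_finite [of "{0}"]
                 split: if_split_asm)
    qed
    then show sumsg: "(\<lambda>i. (deriv ^^ (i + n)) f \<xi> / (fact(i + n)) * (w - \<xi>)^i) sums g w"
      by (simp add: summable_sums_iff g_def)
    show "f w = (w - \<xi>)^n * g w"
      using sums_mult [OF sumsg, of "(w - \<xi>) ^ n"]
      by (intro sums_unique2 [OF fsums]) (auto simp: power_add mult_ac powf_def)
  qed
  then have holg: "g holomorphic_on ball \<xi> r"
    by (meson sumsg power_series_holomorphic)
  have "g \<xi> = (deriv ^^ n) f \<xi> / fact n"
    unfolding g_def by (subst suminf_finite [of "{0}"]) auto
  then show ?thesis using holg feq by blast
qed

lemma integrate_zero:
  fixes W K :: "complex \<Rightarrow> complex"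
  assumes r: "r > 0"
      and holW: "W holomorphic_on ball 1 r" and W1: "W 1 = 0"
      and holK: "K holomorphic_on ball 1 r"
      and dW: "\<And>v. v \<in> ball 1 r \<Longrightarrow> (W has_field_derivative (v - 1) ^ p * K v) (at v)"
  shows "\<exists>K2. K2 holomorphic_on ball 1 r \<and> (\<forall>v\<in>ball 1 r. W v = (v - 1) ^ Suc p * K2 v)
            \<and> K2 1 = K 1 / of_nat (Suc p)"
proof -
  define G where "G v = (v - 1) ^ p * K v" for v
  have holG: "G holomorphic_on ball 1 r" unfolding G_def using holK by (intro holomorphic_intros)
  have c1: "1 \<in> ball (1::complex) r" using r by simp
  have dW': "deriv W v = G v" if "v \<in> ball 1 r" for v
    using DERIV_imp_deriv[OF dW[OF that]] by (simp add: G_def)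
  have holdW: "deriv W holomorphic_on ball 1 r" by (rule holomorphic_deriv[OF holW open_ball])
  have hd: "(deriv ^^ Suc j) W 1 = (deriv ^^ j) G 1" for j
  proof -
    have "(deriv ^^ Suc j) W 1 = (deriv ^^ j) (deriv W) 1"
      by (simp only: funpow_Suc_right o_apply)
    also have "\<dots> = (deriv ^^ j) G 1"
      by (rule higher_deriv_transform_within_open[OF holdW holG open_ball c1]) (use dW' in auto)
    finally show ?thesis .
  qed
  have res: "(deriv ^^ j) G 1 = fact j * residue (\<lambda>v. G v / (v - 1) ^ Suc j) 1" for j
    using residue_holomorphic_over_power[OF open_ball c1 holG, of j] by (simp add: field_simps)
  have lowj: "(deriv ^^ j) G 1 = 0" if "j < p" for j
  proof -
    have "residue (\<lambda>v. G v / (v - 1) ^ Suc j) 1 = residue (\<lambda>v. (v - 1) ^ (p - Suc j) * K v) 1"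
    proof (rule residue_cong[OF _ refl])
      have "(v - 1) ^ p = (v - 1) ^ (p - Suc j) * (v - 1) ^ Suc j" for v :: complex
        using that by (metis Suc_leI le_add_diff_inverse2 power_add)
      then show "\<forall>\<^sub>F v in at 1. G v / (v - 1) ^ Suc j = (v - 1) ^ (p - Suc j) * K v"
        unfolding G_def eventually_at_filter by (auto intro!: always_eventually)
    qed
    also have "\<dots> = 0" by (rule residue_holo[OF open_ball c1]) (use holK in \<open>intro holomorphic_intros\<close>)
    finally show ?thesis using res[of j] by simp
  qed
  have topj: "(deriv ^^ p) G 1 = fact p * K 1"
  proof -
    have "residue (\<lambda>v. G v / (v - 1) ^ Suc p) 1 = residue (\<lambda>v. K v / (v - 1)) 1"
      by (rule residue_cong[OF _ refl])
         (auto simp: G_def eventually_at_filter intro!: always_eventually)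
    also have "\<dots> = K 1" by (rule residue_simple[OF open_ball c1 holK])
    finally show ?thesis using res[of p] by simp
  qed
  have dz: "(deriv ^^ i) W 1 = 0" if "i < Suc p" for i
  proof (cases i)
    case 0 then show ?thesis using W1 by simp
  next
    case (Suc j) then show ?thesis using hd[of j] lowj[of j] that by simp
  qed
  obtain K2 where K2: "K2 holomorphic_on ball 1 r" "\<forall>w\<in>ball 1 r. W w = (w - 1) ^ Suc p * K2 w"
      "K2 1 = (deriv ^^ Suc p) W 1 / fact (Suc p)"
    using taylor_factor[OF holW dz] by blast
  have "K2 1 = K 1 / of_nat (Suc p)"
    unfolding K2(3) hd topj by (simp add: field_simps del: of_nat_Suc)
  then show ?thesis using K2 by blast
qed


definition Bm :: "complex \<Rightarrow> complex \<Rightarrow> nat \<Rightarrow> complex mat" where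
  "Bm t \<Delta> n = Matrix.mat n n (\<lambda>(i, j). phi \<Delta> (i + j) t)"

definition Dm :: "complex \<Rightarrow> complex \<Rightarrow> nat \<Rightarrow> nat \<Rightarrow> complex \<Rightarrow> complex" where
  "Dm t \<Delta> n m v = Determinant.det (Matrix.mat n n (\<lambda>(i, j). if j < n - 1 then phi \<Delta> (i + j) t else phi \<Delta> (i + m) (t * v)))"

definition cof :: "complex \<Rightarrow> complex \<Rightarrow> nat \<Rightarrow> nat \<Rightarrow> complex" where
  "cof t \<Delta> n i = cofactor (Bm t \<Delta> n) i (n - 1)"

lemma ball_nz: "v \<in> ball (1::complex) 1 \<Longrightarrow> v \<noteq> 0"
  by auto

lemma Dm_lap:
  assumes n1: "1 \<le> n"
  shows "Dm t \<Delta> n m v = (\<Sum>i<n. phi \<Delta> (i + m) (t * v) * cof t \<Delta> n i)"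
proof -
  define A where "A = Matrix.mat n n (\<lambda>(i, j). if j < n - 1 then phi \<Delta> (i + j) t else phi \<Delta> (i + m) (t * v))"
  have A: "A \<in> carrier_mat n n" by (simp add: A_def)
  have "Dm t \<Delta> n m v = (\<Sum>i<n. A $$ (i, n - 1) * cofactor A i (n - 1))"
    unfolding Dm_def A_def[symmetric] using n1 by (intro laplace_expansion_column[OF A]) auto
  also have "\<dots> = (\<Sum>i<n. phi \<Delta> (i + m) (t * v) * cof t \<Delta> n i)"
  proof (rule sum.cong[OF refl])
    fix i assume i: "i \<in> {..<n}"
    have md: "mat_delete A i (n - 1) = mat_delete (Bm t \<Delta> n) i (n - 1)"
      by (rule eq_matI) (auto simp: mat_delete_def A_def Bm_def)
    show "A $$ (i, n - 1) * cofactor A i (n - 1) = phi \<Delta> (i + m) (t * v) * cof t \<Delta> n i"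
      using i n1 unfolding cof_def cofactor_def md by (simp add: A_def)
  qed
  finally show ?thesis .
qed

lemma phi_comp_holo:
  assumes "t \<noteq> 0"
  shows "(\<lambda>v. phi \<Delta> k (t * v)) holomorphic_on ball 1 1"
proof -
  have "(phi \<Delta> k \<circ> (\<lambda>v. t * v)) holomorphic_on ball 1 1"
    by (rule holomorphic_on_compose_gen[OF _ phi_holo]) (use assms ball_nz in \<open>auto intro: holomorphic_intros\<close>)
  then show ?thesis by (simp add: comp_def)
qed

lemma Dm_holo:
  assumes "t \<noteq> 0" "1 \<le> n"
  shows "Dm t \<Delta> n m holomorphic_on ball 1 1"
proof -
  have "(\<lambda>v. \<Sum>i<n. phi \<Delta> (i + m) (t * v) * cof t \<Delta> n i) holomorphic_on ball 1 1"
    by (intro holomorphic_intros phi_comp_holo assms)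
  moreover have "Dm t \<Delta> n m = (\<lambda>v. \<Sum>i<n. phi \<Delta> (i + m) (t * v) * cof t \<Delta> n i)"
    using Dm_lap[OF assms(2)] by (intro ext) 
  ultimately show ?thesis by simp
qed

lemma Dm_1_low:
  assumes "1 \<le> n" "m < n - 1"
  shows "Dm t \<Delta> n m 1 = 0"
proof -
  define A where "A = Matrix.mat n n (\<lambda>(i, j). if j < n - 1 then phi \<Delta> (i + j) t else phi \<Delta> (i + m) (t * 1))"
  have A: "A \<in> carrier_mat n n" by (simp add: A_def)
  have "Determinant.det A = 0"
    by (rule det_identical_columns[OF A, of m "n - 1"]) (use assms in \<open>auto intro!: eq_vecI simp: A_def\<close>)
  then show ?thesis by (simp add: Dm_def A_def)
qed

lemma Dm_1_top:
  assumes "1 \<le> n"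
  shows "Dm t \<Delta> n (n - 1) 1 = Determinant.det (Bm t \<Delta> n)"
  unfolding Dm_def Bm_def
  by (rule arg_cong[where f=Determinant.det], rule eq_matI) (auto intro!: arg_cong[where f="\<lambda>k. phi \<Delta> k t"])

lemma W_deriv:
  assumes t0: "t \<noteq> 0" and n1: "1 \<le> n" and v: "v \<in> ball 1 1"
  shows "((\<lambda>v. (t * v - 2 * \<Delta> + inverse (t * v)) * Dm t \<Delta> n m v) has_field_derivative Dm t \<Delta> n (Suc m) v / v) (at v)"
proof -
  have v0: "v \<noteq> 0" using ball_nz[OF v] .
  have each: "((\<lambda>v. (t * v - 2 * \<Delta> + inverse (t * v)) * phi \<Delta> k (t * v)) has_field_derivative phi \<Delta> (Suc k) (t * v) / v) (at v)" for k
  proof -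
    have "((\<lambda>v. (\<lambda>u. (u - 2 * \<Delta> + inverse u) * phi \<Delta> k u) (t * v)) has_field_derivative phi \<Delta> (Suc k) (t * v) / (t * v) * t) (at v)"
      by (rule DERIV_chain2[OF phi_deriv]) (use t0 v0 in \<open>auto intro!: derivative_eq_intros\<close>)
    moreover have "phi \<Delta> (Suc k) (t * v) / (t * v) * t = phi \<Delta> (Suc k) (t * v) / v" using t0 by simp
    ultimately show ?thesis by simp
  qed
  have fe: "(\<lambda>v. (t * v - 2 * \<Delta> + inverse (t * v)) * Dm t \<Delta> n m v)
        = (\<lambda>v. \<Sum>i<n. cof t \<Delta> n i * ((t * v - 2 * \<Delta> + inverse (t * v)) * phi \<Delta> (i + m) (t * v)))"
    by (rule ext) (simp add: Dm_lap[OF n1] sum_distrib_left mult_ac)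
  have "((\<lambda>v. \<Sum>i<n. cof t \<Delta> n i * ((t * v - 2 * \<Delta> + inverse (t * v)) * phi \<Delta> (i + m) (t * v)))
        has_field_derivative (\<Sum>i<n. cof t \<Delta> n i * (phi \<Delta> (Suc (i + m)) (t * v) / v))) (at v)"
    by (intro DERIV_sum DERIV_cmult each)
  moreover have "(\<Sum>i<n. cof t \<Delta> n i * (phi \<Delta> (Suc (i + m)) (t * v) / v)) = Dm t \<Delta> n (Suc m) v / v"
    by (simp add: Dm_lap[OF n1] sum_divide_distrib mult_ac)
  ultimately show ?thesis using fe by simp
qed


lemma van:
  assumes t0: "t \<noteq> 0" and c0: "t - 2 * \<Delta> + inverse t \<noteq> 0" and n1: "1 \<le> n"
  shows "p \<le> n - 1 \<Longrightarrow> \<exists>r>0. r \<le> 1 \<and> (\<exists>K. K holomorphic_on ball 1 r \<and>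
      (\<forall>v\<in>ball 1 r. Dm t \<Delta> n (n - 1 - p) v = (v - 1) ^ p * K v) \<and>
      K 1 = Determinant.det (Bm t \<Delta> n) / ((t - 2 * \<Delta> + inverse t) ^ p * fact p))"
proof (induction p)
  case 0
  show ?case
    by (rule exI[of _ 1], simp, rule exI[of _ "Dm t \<Delta> n (n - 1)"])
       (use Dm_holo[OF t0 n1] Dm_1_top[OF n1] in auto)
next
  case (Suc p)
  define c where "c = t - 2 * \<Delta> + inverse t"
  have c0': "c \<noteq> 0" using c0 by (simp add: c_def)
  from Suc.IH Suc.prems obtain r K where r: "r > 0" "r \<le> 1" and holK: "K holomorphic_on ball 1 r"
    and eqK: "\<forall>v\<in>ball 1 r. Dm t \<Delta> n (n - 1 - p) v = (v - 1) ^ p * K v"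
    and K1: "K 1 = Determinant.det (Bm t \<Delta> n) / (c ^ p * fact p)"
    unfolding c_def by auto
  define m where "m = n - 1 - Suc p"
  have m: "m < n - 1" "Suc m = n - 1 - p" using Suc.prems by (auto simp: m_def)
  define L where "L v = t * v - 2 * \<Delta> + inverse (t * v)" for v
  define W where "W v = L v * Dm t \<Delta> n m v" for v
  have sub: "ball 1 r \<subseteq> ball (1::complex) 1" using r by auto
  have holL: "L holomorphic_on ball 1 1"
    unfolding L_def using t0 ball_nz by (intro holomorphic_intros) auto
  have holW: "W holomorphic_on ball 1 r"
    unfolding W_def by (intro holomorphic_intros holomorphic_on_subset[OF holL sub]
        holomorphic_on_subset[OF Dm_holo[OF t0 n1] sub])
  have W1: "W 1 = 0" unfolding W_def using Dm_1_low[OF n1 m(1)] by simp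
  have holK': "(\<lambda>v. K v / v) holomorphic_on ball 1 r"
  proof -
    have "v \<noteq> 0" if "v \<in> ball 1 r" for v :: complex using ball_nz[OF subsetD[OF sub that]] .
    then show ?thesis by (intro holomorphic_intros holK) auto
  qed
  have dW: "(W has_field_derivative (v - 1) ^ p * (K v / v)) (at v)" if v: "v \<in> ball 1 r" for v
  proof -
    have "(W has_field_derivative Dm t \<Delta> n (Suc m) v / v) (at v)"
      unfolding W_def L_def using W_deriv[OF t0 n1] v sub by blast
    moreover have "Dm t \<Delta> n (Suc m) v / v = (v - 1) ^ p * (K v / v)"
      using eqK v m(2) by simp
    ultimately show ?thesis by simp
  qed
  obtain K2 where holK2: "K2 holomorphic_on ball 1 r"
    and eqW: "\<forall>v\<in>ball 1 r. W v = (v - 1) ^ Suc p * K2 v"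
    and K21: "K2 1 = K 1 / 1 / of_nat (Suc p)"
    using integrate_zero[OF r(1) holW W1 holK' dW] by auto
  have L1: "L 1 = c" by (simp add: L_def c_def)
  have "continuous (at 1) L"
    unfolding L_def using t0 by (intro continuous_intros) auto
  then obtain e where e: "e > 0" "\<forall>y. dist 1 y < e \<longrightarrow> L y \<noteq> 0"
    using continuous_at_avoid[of 1 L 0] L1 c0' by auto
  define r' where "r' = min r e"
  have r': "r' > 0" "r' \<le> 1" using r e by (auto simp: r'_def)
  have sub': "ball 1 r' \<subseteq> ball 1 r" by (auto simp: r'_def)
  have Lnz: "L v \<noteq> 0" if "v \<in> ball 1 r'" for v
    using that e by (auto simp: r'_def)
  show ?case
  proof (intro exI conjI)
    show "r' > 0" "r' \<le> 1" by (rule r')+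
    show "(\<lambda>v. K2 v / L v) holomorphic_on ball 1 r'"
      using Lnz by (intro holomorphic_intros holomorphic_on_subset[OF holK2 sub']
          holomorphic_on_subset[OF holL]) (use sub' sub in auto)
    show "\<forall>v\<in>ball 1 r'. Dm t \<Delta> n (n - 1 - Suc p) v = (v - 1) ^ Suc p * (K2 v / L v)"
    proof
      fix v :: complex assume v: "v \<in> ball 1 r'"
      have "W v = (v - 1) ^ Suc p * K2 v" using eqW v sub' by auto
      then show "Dm t \<Delta> n (n - 1 - Suc p) v = (v - 1) ^ Suc p * (K2 v / L v)"
        using Lnz[OF v] unfolding W_def m_def[symmetric] by (simp add: field_simps)
    qed
    show "K2 1 / L 1 = Determinant.det (Bm t \<Delta> n) / ((t - 2 * \<Delta> + inverse t) ^ Suc p * fact (Suc p))"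
      unfolding L1 K21 K1 c_def[symmetric] using c0'
      by (simp add: field_simps del: of_nat_Suc)
  qed
qed

lemma hN_Dm: "hN t \<Delta> n z = fact (n - 1) * ((t - 2 * \<Delta> + inverse t) * (z / (z - 1))) ^ (n - 1) *
     Dm t \<Delta> n 0 z / Determinant.det (Bm t \<Delta> n)"
proof -
  have e: "(\<lambda>(i, j). if j < n - 1 then phi \<Delta> (i + j) t else phi \<Delta> (i + 0) (t * z))
         = (\<lambda>(i, j). if j < n - 1 then phi \<Delta> (i + j) t else phi \<Delta> i (t * z))" by (simp only: add_0_right)
  show ?thesis unfolding hN_def Dm_def Bm_def e ..
qed

lemma inv_ball:
  fixes z :: complex
  assumes "z \<in> ball 1 (min (1/2) (r/2))"
  shows "inverse z \<in> ball 1 r" "z \<noteq> 0"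
proof -
  have d: "norm (z - 1) < 1/2" "norm (z - 1) < r/2" using assms by (auto simp: dist_norm norm_minus_commute)
  have nz: "norm z > 1/2"
    using d(1) norm_triangle_ineq2[of 1 "1 - z"] by (simp add: norm_minus_commute)
  then show z0: "z \<noteq> 0" by auto
  have "dist 1 (inverse z) = norm (z - 1) / norm z"
    using z0 by (simp add: dist_norm field_simps norm_divide flip: norm_divide)
  also have "\<dots> < r"
  proof -
    have "0 \<le> norm (z - 1)" by simp
    then have rpos: "r > 0" using d(2) by linarith
    have "r * (1/2) < r * norm z" using nz rpos by (intro mult_strict_left_mono) auto
    then have "norm (z - 1) < r * norm z" using d(2) by simp
    then show ?thesis using nz rpos by (simp add: divide_less_eq)
  qed
  finally show "inverse z \<in> ball 1 r" by simp
qed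

lemma H_exists:
  assumes t0: "t \<noteq> 0" and c0: "t - 2 * \<Delta> + inverse t \<noteq> 0" and n1: "1 \<le> n"
      and B0: "Determinant.det (Bm t \<Delta> n) \<noteq> 0"
  shows "\<exists>\<rho>>0. \<exists>H. H holomorphic_on ball 1 \<rho> \<and> H 1 = 1 \<and>
           (\<forall>z\<in>ball 1 \<rho>. z \<noteq> 1 \<longrightarrow> htilde t \<Delta> n z = H z)"
proof -
  define c where "c = t - 2 * \<Delta> + inverse t"
  have c0': "c \<noteq> 0" using c0 by (simp add: c_def)
  obtain r K where r: "r > 0" "r \<le> 1" and holK: "K holomorphic_on ball 1 r"
    and eqK: "\<forall>v\<in>ball 1 r. Dm t \<Delta> n 0 v = (v - 1) ^ (n - 1) * K v"
    and K1: "K 1 = Determinant.det (Bm t \<Delta> n) / (c ^ (n - 1) * fact (n - 1))"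
    using van[OF t0 c0 n1, of "n - 1"] unfolding c_def by auto
  define \<rho> where "\<rho> = min (1/2) (r/2)"
  define H where "H z = fact (n - 1) * c ^ (n - 1) * K (inverse z) / Determinant.det (Bm t \<Delta> n)" for z
  show ?thesis
  proof (intro exI conjI)
    show "\<rho> > 0" using r by (simp add: \<rho>_def)
    have "(K \<circ> inverse) holomorphic_on ball 1 \<rho>"
      by (rule holomorphic_on_compose_gen[OF _ holK])
         (use inv_ball[of _ r] in \<open>auto simp: \<rho>_def intro!: holomorphic_intros\<close>)
    then show "H holomorphic_on ball 1 \<rho>"
      unfolding H_def using B0 by (intro holomorphic_intros) (simp_all add: comp_def)
    show "H 1 = 1" unfolding H_def using B0 c0' by (simp add: K1)
    show "\<forall>z\<in>ball 1 \<rho>. z \<noteq> 1 \<longrightarrow> htilde t \<Delta> n z = H z"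
    proof (intro ballI impI)
      fix z :: complex assume z: "z \<in> ball 1 \<rho>" and z1: "z \<noteq> 1"
      have v: "inverse z \<in> ball 1 r" and z0: "z \<noteq> 0" using inv_ball[of z r] z by (auto simp: \<rho>_def)
      define v where "v = inverse z"
      have v1: "v - 1 \<noteq> 0" using z1 z0 by (auto simp: v_def)
      have zv: "z * v = 1" using z0 by (simp add: v_def)
      have key: "z ^ (n - 1) * (c * (v / (v - 1))) ^ (n - 1) * (v - 1) ^ (n - 1) = c ^ (n - 1)"
      proof -
        have "z * (c * (v / (v - 1))) * (v - 1) = c" using v1 zv by (simp add: field_simps)
        then show ?thesis by (simp flip: power_mult_distrib)
      qed
      have "htilde t \<Delta> n z = z ^ (n - 1) * (fact (n - 1) * (c * (v / (v - 1))) ^ (n - 1) *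
            ((v - 1) ^ (n - 1) * K v) / Determinant.det (Bm t \<Delta> n))"
        unfolding htilde_def hN_Dm c_def[symmetric] v_def[symmetric] using eqK v by (simp add: v_def)
      also have "\<dots> = fact (n - 1) * (z ^ (n - 1) * (c * (v / (v - 1))) ^ (n - 1) * (v - 1) ^ (n - 1)) * K v
            / Determinant.det (Bm t \<Delta> n)"
        by (simp add: mult_ac)
      also have "\<dots> = fact (n - 1) * c ^ (n - 1) * K v / Determinant.det (Bm t \<Delta> n)"
        by (simp only: key)
      also have "\<dots> = H z" by (simp add: H_def v_def)
      finally show "htilde t \<Delta> n z = H z" .
    qed
  qed
qed


definition cr :: "complex \<Rightarrow> complex \<Rightarrow> complex \<Rightarrow> complex \<Rightarrow> complex" where
  "cr t \<Delta> a b = t ^ 2 - 2 * \<Delta> * t * b + a * b"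

definition Emat :: "(nat \<Rightarrow> complex \<Rightarrow> complex) \<Rightarrow> nat \<Rightarrow> nat \<Rightarrow> complex list \<Rightarrow> complex mat" where
  "Emat Hs N k zs = Matrix.mat k k (\<lambda>(i, j). (zs ! j - 1) ^ (k - 1 - i) * (zs ! j) ^ i * Hs (N - i) (zs ! j) / (zs ! j - 1) ^ (k - j))"

definition Rf :: "complex \<Rightarrow> complex \<Rightarrow> (nat \<Rightarrow> complex \<Rightarrow> complex) \<Rightarrow> nat \<Rightarrow> int \<Rightarrow> nat \<Rightarrow> complex list \<Rightarrow> complex" where
  "Rf t \<Delta> Hs N r k zs =
     (\<Prod>j<k. (t ^ 2 - 2 * \<Delta> * t + zs ! j) ^ (k - 1 - j) / (zs ! j) powi (int N - r))
   * (\<Prod>j<k. \<Prod>l\<in>{j<..<k}. 1 / cr t \<Delta> (zs ! j) (zs ! l))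
   * Determinant.det (Emat Hs N k zs)"

lemma nth_snoc_lt: "j < length q \<Longrightarrow> (q @ [w]) ! j = q ! j"
  by (simp add: nth_append)

lemma mdh: "x * y / z = y / z * (x::complex)" by simp

lemma prefix_split1:
  fixes q :: "complex list"
  assumes "length q = k"
  shows "(\<Prod>j<Suc k. (A + (q @ [w]) ! j) ^ (Suc k - 1 - j) / ((q @ [w]) ! j) powi e)
       = (\<Prod>j<k. (A + q ! j) ^ (k - 1 - j) / (q ! j) powi e) * (\<Prod>j<k. (A + q ! j)) * (1 / w powi e)"
proof -
  have "(\<Prod>j<k. (A + (q @ [w]) ! j) ^ (Suc k - 1 - j) / ((q @ [w]) ! j) powi e)
      = (\<Prod>j<k. (A + q ! j) ^ (k - 1 - j) / (q ! j) powi e * (A + q ! j))"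
  proof (rule prod.cong[OF refl])
    fix j assume "j \<in> {..<k}"
    then have j: "j < k" by simp
    then have e: "Suc k - 1 - j = Suc (k - 1 - j)" by simp
    show "(A + (q @ [w]) ! j) ^ (Suc k - 1 - j) / ((q @ [w]) ! j) powi e =
          (A + q ! j) ^ (k - 1 - j) / (q ! j) powi e * (A + q ! j)"
      using j assms by (simp only: nth_snoc_lt e power_Suc) (rule mdh)
  qed
  moreover have "(A + (q @ [w]) ! k) ^ (Suc k - 1 - k) / ((q @ [w]) ! k) powi e = 1 / w powi e"
    using assms by auto
  ultimately show ?thesis
    by (simp only: prod.lessThan_Suc prod.distrib)
qed

lemma prefix_split2:
  fixes q :: "complex list"
  assumes "length q = k"
  shows "(\<Prod>j<Suc k. \<Prod>l\<in>{j<..<Suc k}. 1 / cr t \<Delta> ((q @ [w]) ! j) ((q @ [w]) ! l))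
       = (\<Prod>j<k. \<Prod>l\<in>{j<..<k}. 1 / cr t \<Delta> (q ! j) (q ! l)) * (\<Prod>j<k. 1 / cr t \<Delta> (q ! j) w)"
proof -
  have "(\<Prod>j<k. \<Prod>l\<in>{j<..<Suc k}. 1 / cr t \<Delta> ((q @ [w]) ! j) ((q @ [w]) ! l))
      = (\<Prod>j<k. (\<Prod>l\<in>{j<..<k}. 1 / cr t \<Delta> (q ! j) (q ! l)) * (1 / cr t \<Delta> (q ! j) w))"
  proof (rule prod.cong[OF refl])
    fix j assume "j \<in> {..<k}"
    then have j: "j < k" by simp
    have s: "{j<..<Suc k} = insert k {j<..<k}" using j by auto
    have "(\<Prod>l\<in>{j<..<k}. 1 / cr t \<Delta> ((q @ [w]) ! j) ((q @ [w]) ! l)) = (\<Prod>l\<in>{j<..<k}. 1 / cr t \<Delta> (q ! j) (q ! l))"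
      using j assms by (intro prod.cong refl) (auto simp: nth_snoc_lt)
    then show "(\<Prod>l\<in>{j<..<Suc k}. 1 / cr t \<Delta> ((q @ [w]) ! j) ((q @ [w]) ! l)) =
          (\<Prod>l\<in>{j<..<k}. 1 / cr t \<Delta> (q ! j) (q ! l)) * (1 / cr t \<Delta> (q ! j) w)"
      unfolding s using j assms by (simp add: nth_snoc_lt nth_append mult.commute)
  qed
  moreover have "(\<Prod>l\<in>{k<..<Suc k}. 1 / cr t \<Delta> ((q @ [w]) ! k) ((q @ [w]) ! l)) = 1"
  proof -
    have "{k<..<Suc k} = ({} :: nat set)" by auto
    then show ?thesis by (simp only: prod.empty)
  qed
  ultimately show ?thesis by (simp only: prod.lessThan_Suc prod.distrib mult_1_right)
qed

lemma cof_indep: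
  assumes "length q = k"
  shows "cofactor (Emat Hs N (Suc k) (q @ [w])) i k = cofactor (Emat Hs N (Suc k) (q @ [1])) i k"
proof -
  have "mat_delete (Emat Hs N (Suc k) (q @ [w])) i k = mat_delete (Emat Hs N (Suc k) (q @ [1])) i k"
    by (rule eq_matI) (use assms in \<open>auto simp: mat_delete_def Emat_def nth_append\<close>)
  then show ?thesis by (simp add: cofactor_def)
qed

lemma Emat_last:
  assumes "length q = k" "i < Suc k"
  shows "Emat Hs N (Suc k) (q @ [w]) $$ (i, k) = (w - 1) ^ (k - i) * w ^ i * Hs (N - i) w / (w - 1)"
  using assms by (simp add: Emat_def nth_append)

lemma det_laplace_last:
  assumes "length q = k"
  shows "Determinant.det (Emat Hs N (Suc k) (q @ [w])) =
    (\<Sum>i<Suc k. (w - 1) ^ (k - i) * w ^ i * Hs (N - i) w / (w - 1) * cofactor (Emat Hs N (Suc k) (q @ [1])) i k)"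
proof -
  have E: "Emat Hs N (Suc k) (q @ [w]) \<in> carrier_mat (Suc k) (Suc k)" by (simp add: Emat_def)
  have "Determinant.det (Emat Hs N (Suc k) (q @ [w])) =
      (\<Sum>i<Suc k. Emat Hs N (Suc k) (q @ [w]) $$ (i, k) * cofactor (Emat Hs N (Suc k) (q @ [w])) i k)"
    by (rule laplace_expansion_column[OF E lessI])
  also have "\<dots> = (\<Sum>i<Suc k. (w - 1) ^ (k - i) * w ^ i * Hs (N - i) w / (w - 1) * cofactor (Emat Hs N (Suc k) (q @ [1])) i k)"
  proof (rule sum.cong[OF refl])
    fix i assume "i \<in> {..<Suc k}"
    then have i: "i < Suc k" by simp
    show "Emat Hs N (Suc k) (q @ [w]) $$ (i, k) * cofactor (Emat Hs N (Suc k) (q @ [w])) i k =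
          (w - 1) ^ (k - i) * w ^ i * Hs (N - i) w / (w - 1) * cofactor (Emat Hs N (Suc k) (q @ [1])) i k"
      unfolding cof_indep[OF assms, where w = w] Emat_last[OF assms i] ..
  qed
  finally show ?thesis .
qed

lemma pow_cancel: "x \<noteq> 0 \<Longrightarrow> x ^ Suc a * B / x ^ Suc b = x ^ a * B / (x ^ b :: complex)"
  by simp

lemma pc4: "x - 1 \<noteq> 0 \<Longrightarrow> (x - 1) ^ Suc a * b * c / (x - 1) ^ Suc m = (x - 1) ^ a * b * c / ((x - 1) ^ m :: complex)"
  by (simp add: mult.assoc)

lemma cof_kk:
  assumes "length q = k" "\<forall>z\<in>set q. z \<noteq> 1"
  shows "cofactor (Emat Hs N (Suc k) (q @ [1])) k k = Determinant.det (Emat Hs N k q)"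
proof -
  have "mat_delete (Emat Hs N (Suc k) (q @ [1])) k k = Emat Hs N k q"
  proof (rule eq_matI)
    fix i j assume ij: "i < dim_row (Emat Hs N k q)" "j < dim_col (Emat Hs N k q)"
    then have i: "i < k" and j: "j < k" by (auto simp: Emat_def)
    have qj: "q ! j - 1 \<noteq> 0" using assms j by (auto simp: nth_mem)
    have e1: "k - i = Suc (k - Suc i)" using i by simp
    have e2: "Suc k - j = Suc (k - j)" using j by simp
    show "mat_delete (Emat Hs N (Suc k) (q @ [1])) k k $$ (i, j) = Emat Hs N k q $$ (i, j)"
      using i j assms(1) unfolding mat_delete_def Emat_def
      using qj by (simp add: nth_snoc_lt e1 e2 pc4 del: power_Suc)
  qed (auto simp: Emat_def mat_delete_def)
  then show ?thesis by (simp add: cofactor_def)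
qed

lemma det_col_scale:
  "Determinant.det (Matrix.mat n n (\<lambda>(i, j). f i j * d j)) = (\<Prod>j<n. d j) * Determinant.det (Matrix.mat n n (\<lambda>(i, j). f i j :: complex))"
proof -
  have "(\<Sum>p | p permutes {0..<n}. of_int (sign p) * (\<Prod>i = 0..<n. f i (p i) * d (p i)))
      = (\<Sum>p | p permutes {0..<n}. (\<Prod>j<n. d j) * (of_int (sign p) * (\<Prod>i = 0..<n. f i (p i))))"
  proof (rule sum.cong[OF refl])
    fix p assume "p \<in> {p. p permutes {0..<n}}"
    then have p: "p permutes {0..<n}" by simp
    have "(\<Prod>i = 0..<n. d (p i)) = (\<Prod>i = 0..<n. d i)"
      using prod.permute[OF p, of d] by (simp add: comp_def)
    then show "of_int (sign p) * (\<Prod>i = 0..<n. f i (p i) * d (p i)) =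
          (\<Prod>j<n. d j) * (of_int (sign p) * (\<Prod>i = 0..<n. f i (p i)))"
      by (simp add: prod.distrib atLeast0LessThan mult_ac)
  qed
  then show ?thesis by (simp only: det_mat_expand sum_distrib_left)
qed


lemma res_step:
  fixes t \<Delta> :: complex and Hs :: "nat \<Rightarrow> complex \<Rightarrow> complex" and q :: "complex list"
  assumes \<rho>: "0 < \<rho>" "\<rho> \<le> 1/2"
    and crossnz: "\<And>a b. a \<in> ball 1 \<rho> \<Longrightarrow> b \<in> ball 1 \<rho> \<Longrightarrow> cr t \<Delta> a b \<noteq> 0"
    and holH: "\<And>i. i \<le> k \<Longrightarrow> Hs (N - i) holomorphic_on ball 1 \<rho>"
    and H1: "Hs (N - k) 1 = 1"
    and q: "length q = k" "set q \<subseteq> ball 1 \<rho> - {1}"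
  shows "residue (\<lambda>w. Rf t \<Delta> Hs N r (Suc k) (q @ [w])) 1 = Rf t \<Delta> Hs N r k q"
proof -
  define A where "A = t ^ 2 - 2 * \<Delta> * t"
  define e where "e = int N - r"
  define pref where "pref = (\<Prod>j<k. (A + q ! j) ^ (k - 1 - j) / (q ! j) powi e) *
      (\<Prod>j<k. \<Prod>l\<in>{j<..<k}. 1 / cr t \<Delta> (q ! j) (q ! l))"
  define \<Psi> where "\<Psi> w = (\<Prod>j<k. (A + q ! j)) * (\<Prod>j<k. 1 / cr t \<Delta> (q ! j) w) * (1 / w powi e)" for w
  define C where "C i = cofactor (Emat Hs N (Suc k) (q @ [1])) i k" for i
  define S where "S w = (\<Sum>i<Suc k. (w - 1) ^ (k - i) * w ^ i * Hs (N - i) w * C i)" for w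
  define g where "g w = pref * (\<Psi> w * S w)" for w
  have qin: "q ! j \<in> ball 1 \<rho>" "q ! j \<noteq> 1" if "j < k" for j
  proof -
    have "q ! j \<in> set q" using q(1) that by (simp add: nth_mem)
    then show "q ! j \<in> ball 1 \<rho>" "q ! j \<noteq> 1" using q(2) by auto
  qed
  have split: "Rf t \<Delta> Hs N r (Suc k) (q @ [w]) = pref * \<Psi> w * Determinant.det (Emat Hs N (Suc k) (q @ [w]))" for w
  proof -
    have "Rf t \<Delta> Hs N r (Suc k) (q @ [w]) =
       ((\<Prod>j<k. (A + q ! j) ^ (k - 1 - j) / (q ! j) powi e) * (\<Prod>j<k. (A + q ! j)) * (1 / w powi e))
     * ((\<Prod>j<k. \<Prod>l\<in>{j<..<k}. 1 / cr t \<Delta> (q ! j) (q ! l)) * (\<Prod>j<k. 1 / cr t \<Delta> (q ! j) w))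
     * Determinant.det (Emat Hs N (Suc k) (q @ [w]))"
      unfolding Rf_def A_def[symmetric] e_def[symmetric] prefix_split1[OF q(1)] prefix_split2[OF q(1)] ..
    then show ?thesis unfolding pref_def \<Psi>_def by (simp only: mult_ac)
  qed
  have detw: "Determinant.det (Emat Hs N (Suc k) (q @ [w])) = S w / (w - 1)" for w
    unfolding det_laplace_last[OF q(1)] S_def C_def sum_divide_distrib
    by (intro sum.cong refl) simp
  have ev: "\<forall>\<^sub>F w in at 1. Rf t \<Delta> Hs N r (Suc k) (q @ [w]) = g w / (w - 1)"
    by (intro always_eventually allI) (simp add: split detw g_def)
  have c1: "1 \<in> ball (1::complex) \<rho>" using \<rho> by simp
  have wnz: "w \<noteq> 0" if "w \<in> ball 1 \<rho>" for w :: complex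
    using that \<rho> by (auto simp: dist_norm)
  have hc: "(\<lambda>w. 1 / cr t \<Delta> (q ! j) w) holomorphic_on ball 1 \<rho>" if j: "j \<in> {..<k}" for j
  proof -
    have "cr t \<Delta> (q ! j) w \<noteq> 0" if "w \<in> ball 1 \<rho>" for w
      using crossnz[of "q ! j" w] qin[of j] j that by auto
    then show ?thesis unfolding cr_def by (intro holomorphic_intros) auto
  qed
  have hp: "(\<lambda>w. 1 / w powi e) holomorphic_on ball 1 \<rho>"
    using wnz by (intro holomorphic_intros) auto
  have holPsi: "\<Psi> holomorphic_on ball 1 \<rho>"
    unfolding \<Psi>_def by (intro holomorphic_intros hc hp)
  have holS: "S holomorphic_on ball 1 \<rho>"
    unfolding S_def by (intro holomorphic_intros holH) auto
  have holg: "(\<lambda>w. g w) holomorphic_on ball 1 \<rho>"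
    unfolding g_def by (intro holomorphic_intros holPsi holS)
  have "residue (\<lambda>w. Rf t \<Delta> Hs N r (Suc k) (q @ [w])) 1 = residue (\<lambda>w. g w / (w - 1)) 1"
    by (rule residue_cong[OF ev refl])
  also have "\<dots> = g 1" by (rule residue_simple[OF open_ball c1 holg])
  also have "\<dots> = pref * C k"
  proof -
    have S1: "S 1 = C k"
    proof -
      have "(\<Sum>i<k. (1 - 1) ^ (k - i) * 1 ^ i * Hs (N - i) 1 * C i) = (0::complex)"
        by (intro sum.neutral) auto
      then show ?thesis unfolding S_def by (simp add: H1)
    qed
    have P1: "\<Psi> 1 = 1"
    proof -
      have X: "(\<Prod>j<k. (A + q ! j) * (1 / cr t \<Delta> (q ! j) 1)) = 1"
      proof (rule prod.neutral, intro ballI)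
        fix j assume "j \<in> {..<k}"
        then have "cr t \<Delta> (q ! j) 1 \<noteq> 0" using crossnz[of "q ! j" 1] qin c1 by auto
        moreover have "cr t \<Delta> (q ! j) 1 = A + q ! j" by (simp add: cr_def A_def)
        ultimately show "(A + q ! j) * (1 / cr t \<Delta> (q ! j) 1) = 1" by simp
      qed
      have "\<Psi> 1 = (\<Prod>j<k. (A + q ! j) * (1 / cr t \<Delta> (q ! j) 1)) * (1 / 1 powi e)"
        unfolding \<Psi>_def by (simp only: prod.distrib)
      then show ?thesis unfolding X by simp
    qed
    show ?thesis unfolding g_def S1 P1 by simp
  qed
  also have "\<dots> = Rf t \<Delta> Hs N r k q"
  proof -
    have "C k = Determinant.det (Emat Hs N k q)"
      unfolding C_def by (rule cof_kk[OF q(1)]) (use q in auto)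
    then show ?thesis unfolding Rf_def pref_def A_def e_def by simp
  qed
  finally show ?thesis .
qed

lemma iter_res_cong:
  fixes \<rho> :: real
  assumes "\<rho> > 0"
  shows "(\<forall>q. length q = n \<and> set q \<subseteq> ball 1 \<rho> - {1} \<and> distinct q \<longrightarrow> F q = G q) \<Longrightarrow>
         iter_res n F [] = iter_res n G []"
proof (induction n arbitrary: F G)
  case 0 then show ?case by simp
next
  case (Suc n)
  have "(\<lambda>zs. residue (\<lambda>w. F (zs @ [w])) 1) [] = (\<lambda>zs. residue (\<lambda>w. G (zs @ [w])) 1) [] \<or> True" by simp
  have *: "residue (\<lambda>w. F (q @ [w])) 1 = residue (\<lambda>w. G (q @ [w])) 1"
    if q: "length q = n" "set q \<subseteq> ball 1 \<rho> - {1}" "distinct q" for q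
  proof (rule residue_cong[OF _ refl])
    have e1: "\<forall>\<^sub>F w in at (1::complex). w \<in> ball 1 \<rho> \<and> w \<noteq> 1"
      using eventually_at_ball'[OF assms, of 1 UNIV] by simp
    have e2: "\<forall>\<^sub>F w in at (1::complex). \<forall>a\<in>set q. w \<noteq> a"
      by (rule eventually_ball_finite) (auto intro: eventually_neq_at_within)
    show "\<forall>\<^sub>F w in at 1. F (q @ [w]) = G (q @ [w])"
      using eventually_conj[OF e1 e2]
    proof (rule eventually_mono)
      fix w assume w: "(w \<in> ball 1 \<rho> \<and> w \<noteq> 1) \<and> (\<forall>a\<in>set q. w \<noteq> a)"
      show "F (q @ [w]) = G (q @ [w])"
        using Suc.prems q w by auto
    qed
  qed
  show ?case
    using Suc.IH[of "\<lambda>zs. residue (\<lambda>w. F (zs @ [w])) 1" "\<lambda>zs. residue (\<lambda>w. G (zs @ [w])) 1"] * by simp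
qed


lemma J_eq_R:
  fixes zs :: "complex list"
  assumes len: "length zs = s" and dist: "distinct zs" and ne1: "\<forall>z\<in>set zs. z \<noteq> 1"
      and HH: "\<And>i j. i < s \<Longrightarrow> j < s \<Longrightarrow> Hs (N - i) (zs ! j) = htilde t \<Delta> (N - i) (zs ! j)"
  shows "Jfun t \<Delta> N r s zs = Rf t \<Delta> Hs N r s zs"
proof -
  define A where "A = t ^ 2 - 2 * \<Delta> * t"
  define e where "e = int N - r"
  define PP where "PP = (\<Prod>i<s. \<Prod>j\<in>{i<..<s}. (zs ! i - zs ! j))"
  define M where "M = Matrix.mat s s (\<lambda>(i, j). (zs ! j - 1) ^ (s - 1 - i) * (zs ! j) ^ i * htilde t \<Delta> (N - i) (zs ! j))"
  define D where "D = (\<Prod>j<s. 1 / (zs ! j - 1) ^ (s - j))"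
  define P1 where "P1 = (\<Prod>j<s. (A + zs ! j) ^ (s - 1 - j) / (zs ! j) powi e)"
  define P2 where "P2 = (\<Prod>j<s. \<Prod>l\<in>{j<..<s}. 1 / cr t \<Delta> (zs ! j) (zs ! l))"
  have Pnz: "PP \<noteq> 0"
    unfolding PP_def using dist len by (auto simp: nth_eq_iff_index_eq)
  have hs: "htilde_s t \<Delta> N s zs = Determinant.det M / PP"
    unfolding htilde_s_def M_def PP_def ..
  have E: "Emat Hs N s zs = Matrix.mat s s (\<lambda>(i, j). ((zs ! j - 1) ^ (s - 1 - i) * (zs ! j) ^ i * htilde t \<Delta> (N - i) (zs ! j))
        * (1 / (zs ! j - 1) ^ (s - j)))"
    by (rule eq_matI) (auto simp: Emat_def HH)
  have dE: "Determinant.det (Emat Hs N s zs) = D * Determinant.det M"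
    unfolding E D_def M_def by (rule det_col_scale)
  have j1: "(\<Prod>j<s. (A + zs ! j) ^ (s - 1 - j) / ((zs ! j) powi e * (zs ! j - 1) ^ (s - j))) = P1 * D"
    unfolding P1_def D_def prod.distrib[symmetric] by (intro prod.cong refl) simp
  have j2: "(\<Prod>j<s. \<Prod>k\<in>{j<..<s}. (zs ! j - zs ! k) / (t ^ 2 - 2 * \<Delta> * t * zs ! k + zs ! j * zs ! k)) = PP * P2"
    unfolding PP_def P2_def prod.distrib[symmetric] by (intro prod.cong refl) (simp add: cr_def)
  have "Jfun t \<Delta> N r s zs = (P1 * D) * (PP * P2) * (Determinant.det M / PP)"
    unfolding Jfun_def A_def[symmetric] e_def[symmetric] j1 j2 hs ..
  also have "\<dots> = P1 * P2 * (D * Determinant.det M)" using Pnz by (simp add: field_simps)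
  also have "\<dots> = Rf t \<Delta> Hs N r s zs"
    unfolding Rf_def dE P1_def P2_def A_def e_def ..
  finally show ?thesis .
qed

lemma main_res:
  fixes t \<Delta> :: complex and Hs :: "nat \<Rightarrow> complex \<Rightarrow> complex"
  assumes s: "s \<le> N"
    and \<rho>: "0 < \<rho>" "\<rho> \<le> 1/2"
    and crossnz: "\<And>a b. a \<in> ball 1 \<rho> \<Longrightarrow> b \<in> ball 1 \<rho> \<Longrightarrow> cr t \<Delta> a b \<noteq> 0"
    and holH: "\<And>i. i < s \<Longrightarrow> Hs (N - i) holomorphic_on ball 1 \<rho>"
    and H1: "\<And>i. i < s \<Longrightarrow> Hs (N - i) 1 = 1"
    and HH: "\<And>i z. i < s \<Longrightarrow> z \<in> ball 1 \<rho> \<Longrightarrow> z \<noteq> 1 \<Longrightarrow> Hs (N - i) z = htilde t \<Delta> (N - i) z"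
  shows "iter_res s (Jfun t \<Delta> N r s) [] = 1"
proof -
  have "iter_res s (Jfun t \<Delta> N r s) [] = iter_res s (Rf t \<Delta> Hs N r s) []"
  proof (rule iter_res_cong[OF \<rho>(1)], intro allI impI)
    fix q :: "complex list" assume q: "length q = s \<and> set q \<subseteq> ball 1 \<rho> - {1} \<and> distinct q"
    show "Jfun t \<Delta> N r s q = Rf t \<Delta> Hs N r s q"
    proof (rule J_eq_R)
      show "length q = s" "distinct q" "\<forall>z\<in>set q. z \<noteq> 1" using q by auto
      fix i j assume ij: "i < s" "j < s"
      then have "q ! j \<in> set q" using q by (simp add: nth_mem)
      then have "q ! j \<in> ball 1 \<rho> - {1}" using q by blast
      then show "Hs (N - i) (q ! j) = htilde t \<Delta> (N - i) (q ! j)" using HH[OF ij(1)] by blast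
    qed
  qed
  also have "\<dots> = 1"
  proof -
    have "k \<le> s \<Longrightarrow> iter_res k (Rf t \<Delta> Hs N r k) [] = 1" for k
    proof (induction k)
      case 0
      have "Determinant.det (Emat Hs N 0 []) = 1" by (simp add: Emat_def)
      then show ?case by (simp add: Rf_def)
    next
      case (Suc k)
      have "iter_res (Suc k) (Rf t \<Delta> Hs N r (Suc k)) [] =
            iter_res k (\<lambda>zs. residue (\<lambda>w. Rf t \<Delta> Hs N r (Suc k) (zs @ [w])) 1) []" by simp
      also have "\<dots> = iter_res k (Rf t \<Delta> Hs N r k) []"
      proof (rule iter_res_cong[OF \<rho>(1)], intro allI impI)
        fix q :: "complex list" assume q: "length q = k \<and> set q \<subseteq> ball 1 \<rho> - {1} \<and> distinct q"
        show "residue (\<lambda>w. Rf t \<Delta> Hs N r (Suc k) (q @ [w])) 1 = Rf t \<Delta> Hs N r k q"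
        proof (rule res_step[OF \<rho> crossnz])
          show "Hs (N - i) holomorphic_on ball 1 \<rho>" if "i \<le> k" for i
            using holH[of i] that Suc.prems by simp
          show "Hs (N - k) 1 = 1" using H1[of k] Suc.prems by simp
          show "length q = k" "set q \<subseteq> ball 1 \<rho> - {1}" using q by auto
        qed
      qed
      also have "\<dots> = 1" using Suc by simp
      finally show ?case .
    qed
    then show ?thesis by simp
  qed
  finally show ?thesis .
qed


lemma cross_ball:
  fixes t \<Delta> :: complex
  assumes nz: "t ^ 2 - 2 * \<Delta> * t + 1 \<noteq> 0"
  shows "\<exists>\<rho>>0. \<rho> \<le> 1/2 \<and> (\<forall>a b. a \<in> ball 1 \<rho> \<longrightarrow> b \<in> ball 1 \<rho> \<longrightarrow> cr t \<Delta> a b \<noteq> 0)"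
proof -
  define K where "K = cmod (t ^ 2 - 2 * \<Delta> * t + 1)"
  define M where "M = 2 + cmod (1 - 2 * \<Delta> * t)"
  have K: "K > 0" using nz by (simp add: K_def)
  have M: "M \<ge> 2" by (simp add: M_def)
  define \<rho> where "\<rho> = min (1/2) (K / (2 * M))"
  have \<rho>: "\<rho> > 0" "\<rho> \<le> 1/2" "\<rho> * M \<le> K / 2"
  proof -
    show "\<rho> > 0" using K M by (simp add: \<rho>_def)
    show "\<rho> \<le> 1/2" by (simp add: \<rho>_def)
    have "\<rho> \<le> K / (2 * M)" by (simp add: \<rho>_def)
    then have "\<rho> * M \<le> K / (2 * M) * M" using M by (intro mult_right_mono) auto
    also have "\<dots> = K / 2" using M by (simp add: field_simps)
    finally show "\<rho> * M \<le> K / 2" .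
  qed
  have "cr t \<Delta> a b \<noteq> 0" if a: "a \<in> ball 1 \<rho>" and b: "b \<in> ball 1 \<rho>" for a b
  proof
    assume c0: "cr t \<Delta> a b = 0"
    define R where "R = (a - 1) * b + (1 - 2 * \<Delta> * t) * (b - 1)"
    have "cr t \<Delta> a b = (t ^ 2 - 2 * \<Delta> * t + 1) + R"
      by (simp add: cr_def R_def algebra_simps power2_eq_square)
    then have "t ^ 2 - 2 * \<Delta> * t + 1 = - R" using c0 by (simp add: eq_neg_iff_add_eq_0)
    then have KR: "K = cmod R" by (simp add: K_def)
    have na: "cmod (a - 1) < \<rho>" and nb: "cmod (b - 1) < \<rho>"
      using a b by (auto simp: dist_norm norm_minus_commute)
    have nb2: "cmod b \<le> 2"
    proof -
      have "cmod b \<le> cmod (b - 1) + cmod (1::complex)" using norm_triangle_ineq[of "b - 1" 1] by simp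
      then show ?thesis using nb \<rho>(2) by simp
    qed
    have "cmod R \<le> cmod (a - 1) * cmod b + cmod (1 - 2 * \<Delta> * t) * cmod (b - 1)"
      unfolding R_def by (metis norm_mult norm_triangle_ineq)
    also have "\<dots> \<le> \<rho> * 2 + cmod (1 - 2 * \<Delta> * t) * \<rho>"
      using na nb nb2 \<rho>(1) by (intro add_mono mult_mono mult_left_mono) auto
    also have "\<dots> = \<rho> * M" by (simp add: M_def algebra_simps)
    also have "\<dots> \<le> K / 2" by (rule \<rho>(3))
    finally show False using KR K by simp
  qed
  then show ?thesis using \<rho> by blast
qed

definition Dfun :: "nat \<Rightarrow> complex \<Rightarrow> complex \<Rightarrow> complex" where
  "Dfun n \<Delta> t = Determinant.det (Matrix.mat n n (\<lambda>(i, j). poly (qq \<Delta> (i + j)) t))"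

lemma Dfun_Bm:
  assumes "t \<noteq> 0"
  shows "Dfun n \<Delta> t = (\<Prod>i<n. t ^ i) ^ 2 * Determinant.det (Bm t \<Delta> n)"
proof -
  have "Matrix.mat n n (\<lambda>(i, j). poly (qq \<Delta> (i + j)) t) = Matrix.mat n n (\<lambda>(i, j). t ^ i * t ^ j * phi \<Delta> (i + j) t)"
    by (rule eq_matI) (auto simp: qq_phi[OF assms] power_add)
  then show ?thesis unfolding Dfun_def Bm_def by (simp only: det_scale)
qed

lemma pf_Dfun: "pf (Dfun n)"
proof -
  have "pf (\<lambda>\<Delta> t. Determinant.det (Matrix.mat n n (\<lambda>(i, j). poly (qq \<Delta> (i + j)) t)))"
    by (rule pf_det) (rule pf_qq)
  then show ?thesis unfolding Dfun_def[abs_def] .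
qed

lemma Dfun_00: "Dfun n 0 0 \<noteq> 0"
proof -
  have "Matrix.mat n n (\<lambda>(i, j). poly (qq 0 (i + j)) 0) = Matrix.mat n n (\<lambda>(i, j). (-1) ^ (i + j) * fact (i + j) :: complex)"
    by (rule eq_matI) (auto simp: qq_0)
  then show ?thesis unfolding Dfun_def using hankel_fact_ne0 by simp
qed

theorem lemma1:
  fixes N s :: nat and r :: int
  assumes "1 \<le> N" and "1 \<le> s" and "s \<le> N"
  shows "\<exists>P :: complex poly poly. P \<noteq> 0 \<and>
           (\<forall>t \<Delta> :: complex. poly (poly P [:\<Delta>:]) t \<noteq> 0 \<longrightarrow>
              iter_res s (Jfun t \<Delta> N r s) [] = 1)"
proof -
  have "\<forall>n. \<exists>P :: complex poly poly. \<forall>\<Delta> t. poly (poly P [:\<Delta>:]) t = Dfun n \<Delta> t"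
    using pf_Dfun unfolding pf_def by blast
  then obtain Pf where Pf: "\<And>n \<Delta> t. poly (poly (Pf n) [:\<Delta>:]) t = Dfun n \<Delta> t"
    by metis
  have Pfnz: "Pf n \<noteq> 0" for n
  proof
    assume "Pf n = 0"
    then have "Dfun n 0 0 = 0" using Pf[of n 0 0] by simp
    then show False using Dfun_00 by simp
  qed
  define Q1 :: "complex poly poly" where "Q1 = [:[:0, 1:]:]"
  define Q2 :: "complex poly poly" where "Q2 = [:[:1, 0, 1:], [:0, -2:]:]"
  have eQ1: "poly (poly Q1 [:\<Delta>:]) t = t" for \<Delta> t by (simp add: Q1_def)
  have eQ2: "poly (poly Q2 [:\<Delta>:]) t = t ^ 2 - 2 * \<Delta> * t + 1" for \<Delta> t
    by (simp add: Q2_def algebra_simps power2_eq_square)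
  have Q1nz: "Q1 \<noteq> 0" by (simp add: Q1_def)
  have Q2nz: "Q2 \<noteq> 0" by (simp add: Q2_def)
  define P where "P = Q1 * Q2 * (\<Prod>n\<in>{1..N}. Pf n)"
  have Pnz: "P \<noteq> 0" unfolding P_def using Q1nz Q2nz Pfnz by simp
  have eP: "poly (poly P [:\<Delta>:]) t = t * (t ^ 2 - 2 * \<Delta> * t + 1) * (\<Prod>n\<in>{1..N}. Dfun n \<Delta> t)" for \<Delta> t
    unfolding P_def by (simp add: poly_prod eQ1 eQ2 Pf)
  show ?thesis
  proof (intro exI conjI allI impI)
    show "P \<noteq> 0" by (rule Pnz)
    fix t \<Delta> :: complex
    assume "poly (poly P [:\<Delta>:]) t \<noteq> 0"
    then have t0: "t \<noteq> 0" and c1: "t ^ 2 - 2 * \<Delta> * t + 1 \<noteq> 0" and Dn: "\<And>n. n \<in> {1..N} \<Longrightarrow> Dfun n \<Delta> t \<noteq> 0"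
      unfolding eP by auto
    have c0: "t - 2 * \<Delta> + inverse t \<noteq> 0"
    proof
      assume "t - 2 * \<Delta> + inverse t = 0"
      then have "t * (t - 2 * \<Delta> + inverse t) = 0" by simp
      then have "t ^ 2 - 2 * \<Delta> * t + 1 = 0" using t0 by (simp add: algebra_simps power2_eq_square)
      then show False using c1 by simp
    qed
    have B0: "Determinant.det (Bm t \<Delta> n) \<noteq> 0" if "n \<in> {1..N}" for n
      using Dn[OF that] Dfun_Bm[OF t0, of n \<Delta>] by auto
    have "\<forall>n\<in>{1..N}. \<exists>\<rho>>0. \<exists>H. H holomorphic_on ball 1 \<rho> \<and> H 1 = 1 \<and>
           (\<forall>z\<in>ball 1 \<rho>. z \<noteq> 1 \<longrightarrow> htilde t \<Delta> n z = H z)"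
      using H_exists[OF t0 c0] B0 by auto
    then obtain \<rho>f where \<rho>f: "\<forall>n\<in>{1..N}. \<rho>f n > 0 \<and> (\<exists>H. H holomorphic_on ball 1 (\<rho>f n) \<and> H 1 = 1 \<and>
           (\<forall>z\<in>ball 1 (\<rho>f n). z \<noteq> 1 \<longrightarrow> htilde t \<Delta> n z = H z))"
      by (metis (no_types, lifting) bchoice)
    then obtain Hf where Hf: "\<forall>n\<in>{1..N}. Hf n holomorphic_on ball 1 (\<rho>f n) \<and> Hf n 1 = 1 \<and>
           (\<forall>z\<in>ball 1 (\<rho>f n). z \<noteq> 1 \<longrightarrow> htilde t \<Delta> n z = Hf n z)"
      by (metis (no_types, lifting) bchoice)
    obtain \<rho>c where \<rho>c: "\<rho>c > 0" "\<rho>c \<le> 1/2" "\<And>a b. a \<in> ball 1 \<rho>c \<Longrightarrow> b \<in> ball 1 \<rho>c \<Longrightarrow> cr t \<Delta> a b \<noteq> 0"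
      using cross_ball[OF c1] by blast
    define \<rho> where "\<rho> = min \<rho>c (Min (\<rho>f ` {1..N}))"
    have fin: "finite (\<rho>f ` {1..N})" "\<rho>f ` {1..N} \<noteq> {}" using assms by auto
    have \<rho>pos: "\<rho> > 0" using \<rho>c(1) \<rho>f fin by (simp add: \<rho>_def)
    have \<rho>le: "\<rho> \<le> \<rho>f n" if "n \<in> {1..N}" for n
    proof -
      have "Min (\<rho>f ` {1..N}) \<le> \<rho>f n" using Min_le[OF fin(1), of "\<rho>f n"] that by blast
      then show ?thesis unfolding \<rho>_def by (simp add: min.coboundedI2)
    qed
    have \<rho>le2: "\<rho> \<le> \<rho>c" by (simp add: \<rho>_def)
    have Nn: "N - i \<in> {1..N}" if "i < s" for i using that assms by auto
    show "iter_res s (Jfun t \<Delta> N r s) [] = 1"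
    proof (rule main_res[where Hs = Hf and \<rho> = \<rho>])
      show "s \<le> N" by (rule assms(3))
      show "0 < \<rho>" by (rule \<rho>pos)
      show "\<rho> \<le> 1/2" using \<rho>le2 \<rho>c(2) by simp
      show "cr t \<Delta> a b \<noteq> 0" if "a \<in> ball 1 \<rho>" "b \<in> ball 1 \<rho>" for a b
        using \<rho>c(3)[of a b] that \<rho>le2 by auto
      show "Hf (N - i) holomorphic_on ball 1 \<rho>" if "i < s" for i
      proof -
        have "Hf (N - i) holomorphic_on ball 1 (\<rho>f (N - i))" using Hf Nn[OF that] by blast
        moreover have "ball 1 \<rho> \<subseteq> ball 1 (\<rho>f (N - i))" using \<rho>le[OF Nn[OF that]] by (rule subset_ball)
        ultimately show ?thesis by (rule holomorphic_on_subset)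
      qed
      show "Hf (N - i) 1 = 1" if "i < s" for i using Hf Nn[OF that] by auto
      show "Hf (N - i) z = htilde t \<Delta> (N - i) z" if "i < s" "z \<in> ball 1 \<rho>" "z \<noteq> 1" for i z
        using Hf Nn[OF that(1)] \<rho>le[OF Nn[OF that(1)]] that by fastforce
    qed
  qed
qed


end
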